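(* Let $G$ be a countable discrete group acting by a topological partial action $\theta=\{\theta_g\colon Y_{g^{-1}}\to Y_g\}_{g\in G}$ on a compact space $Y$, and let $X$ be a nonempty compact space, with $\hat\theta$ the induced partial action on $C(X,Y)$. Then the following are equivalent: (i) $Y_g$ is clopen for all $g\in G$; (ii) the enveloping space $Y_G$ is Hausdorff; (iii) the enveloping space $C(X,Y)_G$ is Hausdorff.
   Context: A topological partial action of $G$ on $Y$ is a family of homeomorphisms $\theta_g\colon Y_{g^{-1}}\to Y_g$ between open subsets with $Y_e=Y$, $\theta_e=\mathrm{id}_Y$, $\theta_{g^{-1}}=\theta_g^{-1}$, $\theta_g\circ\theta_h$ a restriction of $\theta_{gh}$. $C(X,Y)$ has the compact-open topology; $\hat\theta$ has $C(X,Y)_g=\{f: f(X)\subset Y_g\}$ and $\hat\theta_g(f)=\theta_g\circ f$. For a topological partial action on $W$, the enveloping space is $W_G=(G\times W)/R$ with the quotient topology, where $(g,x)R(h,y)$ iff $x\in W_{g^{-1}h}$ and $\theta_{h^{-1}g}(x)=y$. *)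

theory Defs
  imports "HOL-Analysis.Analysis" "HOL-Algebra.Group"
begin

definition top_partial_action ::
  "('g, 'm) monoid_scheme \<Rightarrow> 'a topology \<Rightarrow> ('g \<Rightarrow> 'a set) \<Rightarrow> ('g \<Rightarrow> 'a \<Rightarrow> 'a) \<Rightarrow> bool" where
  "top_partial_action G W D th \<longleftrightarrow>
     (\<forall>g\<in>carrier G. openin W (D g)) \<and>
     D \<one>\<^bsub>G\<^esub> = topspace W \<and>
     (\<forall>x\<in>topspace W. th \<one>\<^bsub>G\<^esub> x = x) \<and>
     (\<forall>g\<in>carrier G. homeomorphic_map (subtopology W (D (inv\<^bsub>G\<^esub> g))) (subtopology W (D g)) (th g)) \<and>
     (\<forall>g\<in>carrier G. \<forall>x\<in>D (inv\<^bsub>G\<^esub> g). th (inv\<^bsub>G\<^esub> g) (th g x) = x) \<and>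
     (\<forall>g\<in>carrier G. \<forall>h\<in>carrier G. \<forall>x\<in>D (inv\<^bsub>G\<^esub> h).
        th h x \<in> D (inv\<^bsub>G\<^esub> g) \<longrightarrow>
          x \<in> D (inv\<^bsub>G\<^esub> (g \<otimes>\<^bsub>G\<^esub> h)) \<and> th (g \<otimes>\<^bsub>G\<^esub> h) x = th g (th h x))"

definition quotient_topology :: "'a topology \<Rightarrow> ('a \<times> 'a) set \<Rightarrow> 'a set topology" where
  "quotient_topology X R =
     topology_generated_by {U. U \<subseteq> topspace X // R \<and> openin X (\<Union>U)}"

definition envel_rel ::
  "('g, 'm) monoid_scheme \<Rightarrow> 'a topology \<Rightarrow> ('g \<Rightarrow> 'a set) \<Rightarrow> ('g \<Rightarrow> 'a \<Rightarrow> 'a) \<Rightarrow> (('g \<times> 'a) \<times> ('g \<times> 'a)) set" where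
  "envel_rel G W D th =
     {((g, x), (h, y)). g \<in> carrier G \<and> h \<in> carrier G \<and> x \<in> topspace W \<and> y \<in> topspace W \<and>
        x \<in> D (inv\<^bsub>G\<^esub> g \<otimes>\<^bsub>G\<^esub> h) \<and> th (inv\<^bsub>G\<^esub> h \<otimes>\<^bsub>G\<^esub> g) x = y}"

definition enveloping_space ::
  "('g, 'm) monoid_scheme \<Rightarrow> 'a topology \<Rightarrow> ('g \<Rightarrow> 'a set) \<Rightarrow> ('g \<Rightarrow> 'a \<Rightarrow> 'a) \<Rightarrow> ('g \<times> 'a) set topology" where
  "enveloping_space G W D th =
     quotient_topology (prod_topology (discrete_topology (carrier G)) W) (envel_rel G W D th)"

text \<open>C(X,Y): continuous maps, made extensional (undefined outside topspace X).\<close>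
definition cmaps :: "'a topology \<Rightarrow> 'b topology \<Rightarrow> ('a \<Rightarrow> 'b) set" where
  "cmaps X Y = {f. f \<in> topspace X \<rightarrow>\<^sub>E topspace Y \<and> continuous_map X Y f}"

definition compact_open :: "'a topology \<Rightarrow> 'b topology \<Rightarrow> ('a \<Rightarrow> 'b) topology" where
  "compact_open X Y = topology_generated_by
     {{f \<in> cmaps X Y. f ` K \<subseteq> U} | K U. compactin X K \<and> openin Y U}"

definition hat_dom :: "'a topology \<Rightarrow> 'b topology \<Rightarrow> ('g \<Rightarrow> 'b set) \<Rightarrow> 'g \<Rightarrow> ('a \<Rightarrow> 'b) set" where
  "hat_dom X Y D g = {f \<in> cmaps X Y. f ` topspace X \<subseteq> D g}"

definition hat_act :: "'a topology \<Rightarrow> ('g \<Rightarrow> 'b \<Rightarrow> 'b) \<Rightarrow> 'g \<Rightarrow> ('a \<Rightarrow> 'b) \<Rightarrow> ('a \<Rightarrow> 'b)" where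
  "hat_act X th g f = (\<lambda>x\<in>topspace X. th g (f x))"

end

theory Submission
  imports Defs
begin


definition alg_pa :: "('g, 'm) monoid_scheme \<Rightarrow> 'a topology \<Rightarrow> ('g \<Rightarrow> 'a set) \<Rightarrow> ('g \<Rightarrow> 'a \<Rightarrow> 'a) \<Rightarrow> bool" where
  "alg_pa G W D th \<longleftrightarrow>
     (\<forall>g\<in>carrier G. D g \<subseteq> topspace W) \<and>
     D \<one>\<^bsub>G\<^esub> = topspace W \<and>
     (\<forall>x\<in>topspace W. th \<one>\<^bsub>G\<^esub> x = x) \<and>
     (\<forall>g\<in>carrier G. \<forall>x\<in>D (inv\<^bsub>G\<^esub> g). th g x \<in> topspace W \<longrightarrow> th g x \<in> D g) \<and>
     (\<forall>g\<in>carrier G. \<forall>x\<in>D (inv\<^bsub>G\<^esub> g). th (inv\<^bsub>G\<^esub> g) (th g x) = x) \<and>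
     (\<forall>g\<in>carrier G. \<forall>h\<in>carrier G. \<forall>x\<in>D (inv\<^bsub>G\<^esub> h).
        th h x \<in> D (inv\<^bsub>G\<^esub> g) \<longrightarrow>
          x \<in> D (inv\<^bsub>G\<^esub> (g \<otimes>\<^bsub>G\<^esub> h)) \<and> th (g \<otimes>\<^bsub>G\<^esub> h) x = th g (th h x))"

lemma (in group) equiv_envel:
  assumes A: "alg_pa G W D th"
  shows "equiv (carrier G \<times> topspace W) (envel_rel G W D th)"
proof -
  note A' = A[unfolded alg_pa_def]
  show ?thesis
  proof (rule equivI)
    show "refl_on (carrier G \<times> topspace W) (envel_rel G W D th)"
      unfolding refl_on_def envel_rel_def using A' by auto
  next
    show "sym (envel_rel G W D th)"
    proof (rule symI)
      fix a b assume ab: "(a, b) \<in> envel_rel G W D th"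
      obtain g x h y where ab': "a = (g,x)" "b = (h,y)" by (cases a, cases b) auto
      let ?l = "inv h \<otimes>g"
      from ab ab' have g: "g \<in> carrier G" and h: "h \<in> carrier G" and x: "x \<in> topspace W"
        and y: "y \<in> topspace W" and xd: "x \<in> D (inv g \<otimes> h)" and yv: "th ?l x = y"
        by (auto simp: envel_rel_def)
      have il: "inv ?l = inv g \<otimes> h" using g h by (simp add: inv_mult_group)
      have l: "?l \<in> carrier G" using g h by simp
      have "y \<in> D ?l" using A' l xd il yv y by metis
      moreover have "th (inv g \<otimes> h) y = x" using A' l xd il yv by metis
      moreover have "inv h \<otimes> g = ?l" by simp
      ultimately show "(b, a) \<in> envel_rel G W D th"
        using g h x y ab' by (auto simp: envel_rel_def)
    qed
  next
    show "trans (envel_rel G W D th)"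
    proof (rule transI)
      fix a b c assume ab: "(a, b) \<in> envel_rel G W D th" and bc: "(b, c) \<in> envel_rel G W D th"
      obtain g x h y l z where ab': "a = (g,x)" "b = (h,y)" "c = (l,z)"
        by (cases a, cases b, cases c) auto
      from ab bc ab' have g: "g \<in> carrier G" and h: "h \<in> carrier G" and l: "l \<in> carrier G"
        and x: "x \<in> topspace W" and z: "z \<in> topspace W"
        and xd: "x \<in> D (inv g \<otimes> h)" and yv: "th (inv h \<otimes> g) x = y"
        and yd: "y \<in> D (inv h \<otimes> l)" and zv: "th (inv l \<otimes> h) y = z"
        by (auto simp: envel_rel_def)
      let ?g' = "inv l \<otimes>h" and ?h' = "inv h \<otimes>g"
      have g': "?g' \<in> carrier G" and h': "?h' \<in> carrier G" using g h l by auto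
      have i1: "inv ?h' = inv g \<otimes> h" using g h by (simp add: inv_mult_group)
      have i2: "inv ?g' = inv h \<otimes> l" using l h by (simp add: inv_mult_group)
      have prod: "?g' \<otimes> ?h' = inv l \<otimes> g" using g h l
        by (simp add: m_assoc[symmetric]) (simp add: m_assoc r_inv)
      have i3: "inv (inv l \<otimes> g) = inv g \<otimes> l" using g l by (simp add: inv_mult_group)
      have "x \<in> D (inv (?g' \<otimes> ?h')) \<and> th (?g' \<otimes> ?h') x = th ?g' (th ?h' x)"
        using A' g' h' xd i1 yv yd i2 by metis
      then have "x \<in> D (inv g \<otimes> l)" "th (inv l \<otimes> g) x = z"
        using prod i3 yv zv by auto
      then show "(a, c) \<in> envel_rel G W D th"
        using g l x z ab' by (auto simp: envel_rel_def)
    qed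
  qed (auto simp: envel_rel_def)
qed

lemma quot_open_char:
  assumes E: "equiv (topspace P) R"
  shows "openin (quotient_topology P R) V \<longleftrightarrow> V \<subseteq> topspace P // R \<and> openin P (\<Union>V)"
proof
  assume "openin (quotient_topology P R) V"
  then have "generate_topology_on {U. U \<subseteq> topspace P // R \<and> openin P (\<Union>U)} V"
    unfolding quotient_topology_def by (rule openin_topology_generated_by)
  then show "V \<subseteq> topspace P // R \<and> openin P (\<Union>V)"
  proof induct
    case (Int a b)
    have "\<Union>(a \<inter> b) = \<Union>a \<inter> \<Union>b"
    proof
      show "\<Union>a \<inter> \<Union>b \<subseteq> \<Union>(a \<inter> b)"
      proof
        fix x assume "x \<in> \<Union>a \<inter> \<Union>b"
        then obtain A B where "A \<in> a" "B \<in> b" "x \<in> A" "x \<in> B" by auto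
        moreover have "A = B \<or> A \<inter> B = {}"
          using quotient_disj[OF E] Int \<open>A \<in> a\<close> \<open>B \<in> b\<close> by blast
        ultimately show "x \<in> \<Union>(a \<inter> b)" by auto
      qed
    qed auto
    then show ?case using Int by auto
  next
    case (UN K)
    have "\<Union>(\<Union>K) = \<Union>(Union ` K)" by auto
    moreover have "openin P (\<Union>(Union ` K))" using UN by (intro openin_Union) auto
    moreover have "\<Union>K \<subseteq> topspace P // R" using UN by blast
    ultimately show ?case by auto
  qed auto
next
  assume "V \<subseteq> topspace P // R \<and> openin P (\<Union>V)"
  then show "openin (quotient_topology P R) V"
    unfolding quotient_topology_def by (intro topology_generated_by_Basis) auto
qed

lemma quot_topspace:
  assumes E: "equiv (topspace P) R"
  shows "topspace (quotient_topology P R) = topspace P // R"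
proof -
  have "topspace P // R \<in> {U. U \<subseteq> topspace P // R \<and> openin P (\<Union>U)}"
    using Union_quotient[OF E] by auto
  then show ?thesis unfolding quotient_topology_def topology_generated_by_topspace by auto
qed

lemma quot_class_in:
  assumes E: "equiv T R" and V: "V \<subseteq> T // R" and p: "p \<in> T"
  shows "R``{p} \<in> V \<longleftrightarrow> p \<in> \<Union>V"
proof
  assume "R``{p} \<in> V" then show "p \<in> \<Union>V" using E p by (metis UnionI equiv_class_self)
next
  assume "p \<in> \<Union>V"
  then obtain A where A: "A \<in> V" "p \<in> A" by auto
  then obtain q where q: "q \<in> T" "A = R``{q}" using V by (auto elim: quotientE)
  then have "(q, p) \<in> R" using A by auto
  then have "R``{q} = R``{p}" using equiv_class_eq[OF E] by auto
  then show "R``{p} \<in> V" using A q by auto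
qed

lemma slices_open:
  assumes "E \<subseteq> I \<times> topspace W" and "\<And>l. l \<in> I \<Longrightarrow> openin W {b. (l,b) \<in> E}"
  shows "openin (prod_topology (discrete_topology I) W) E"
proof -
  have "E = (\<Union>l\<in>I. {l} \<times> {b. (l,b) \<in> E})" using assms(1) by auto
  moreover have "openin (prod_topology (discrete_topology I) W) ({l} \<times> {b. (l,b) \<in> E})" if "l \<in> I" for l
    using assms(2)[OF that] that by (simp add: openin_prod_Times_iff)
  moreover have "openin (prod_topology (discrete_topology I) W) (\<Union>l\<in>I. {l} \<times> {b. (l,b) \<in> E})"
    using calculation(2) by (intro openin_Union) auto
  ultimately show ?thesis by simp
qed

lemma preimage_open:
  assumes "continuous_map (subtopology W S) W f" "openin W S" "openin W U"
  shows "openin W {a\<in>S. f a \<in> U}"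
proof -
  have "openin (subtopology W S) {x \<in> topspace (subtopology W S). f x \<in> U}"
    by (rule openin_continuous_map_preimage[OF assms(1,3)])
  moreover have "topspace (subtopology W S) = S" using assms(2) openin_subset by auto
  moreover have eq: "{x \<in> topspace (subtopology W S). f x \<in> U} = {x \<in> S. f x \<in> U}"
    using calculation(2) by simp
  ultimately have "openin (subtopology W S) {x \<in> S. f x \<in> U}" by (simp only: eq)
  then show ?thesis by (simp add: openin_open_subtopology[OF assms(2)])
qed

lemma (in group) envel_rel_iff:
  "((g,a),(l,b)) \<in> envel_rel G W D th \<longleftrightarrow>
     g \<in> carrier G \<and> l \<in> carrier G \<and> a \<in> topspace W \<and> b \<in> topspace W \<and>
     a \<in> D (inv g \<otimes> l) \<and> th (inv l \<otimes> g) a = b"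
  by (simp add: envel_rel_def)

lemma (in group) sat_open:
  assumes A: "alg_pa G W D th"
    and Dopen: "\<And>g. g \<in> carrier G \<Longrightarrow> openin W (D g)"
    and cont: "\<And>g. g \<in> carrier G \<Longrightarrow> continuous_map (subtopology W (D (inv g))) W (th g)"
    and g: "g \<in> carrier G" and U: "openin W U"
  shows "openin (enveloping_space G W D th) ((\<lambda>a. envel_rel G W D th `` {(g,a)}) ` U)"
proof -
  let ?P = "prod_topology (discrete_topology (carrier G)) W"
  let ?R = "envel_rel G W D th"
  have TP: "topspace ?P = carrier G \<times> topspace W" by simp
  have E: "equiv (topspace ?P) ?R" using equiv_envel[OF A] TP by simp
  have Usub: "U \<subseteq> topspace W" using U openin_subset by auto
  have "(\<lambda>a. ?R `` {(g,a)}) ` U \<subseteq> topspace ?P // ?R"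
    using Usub g TP by (auto intro!: quotientI)
  moreover have "openin ?P (\<Union>((\<lambda>a. ?R `` {(g,a)}) ` U))"
  proof (rule slices_open)
    show "\<Union>((\<lambda>a. ?R `` {(g,a)}) ` U) \<subseteq> carrier G \<times> topspace W"
      by (auto simp: envel_rel_def)
  next
    fix l assume l: "l \<in> carrier G"
    let ?m = "inv g \<otimes> l"
    have m: "?m \<in> carrier G" using g l by simp
    have im: "inv ?m = inv l \<otimes> g" using g l by (simp add: inv_mult_group)
    have "{b. (l, b) \<in> \<Union>((\<lambda>a. ?R `` {(g,a)}) ` U)} = {b \<in> D (inv ?m). th ?m b \<in> U}"
    proof (intro subset_antisym subsetI)
      fix b assume "b \<in> {b. (l, b) \<in> \<Union>((\<lambda>a. ?R `` {(g,a)}) ` U)}"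
      then obtain a where a: "a \<in> U" "((g,a),(l,b)) \<in> ?R" by auto
      then have "((l,b),(g,a)) \<in> ?R" using E by (meson equiv_def symD)
      then show "b \<in> {b \<in> D (inv ?m). th ?m b \<in> U}" using a im by (simp add: envel_rel_def)
    next
      fix b assume b: "b \<in> {b \<in> D (inv ?m). th ?m b \<in> U}"
      have "D (inv ?m) \<subseteq> topspace W" using A m by (simp add: alg_pa_def)
      then have "((l,b),(g, th ?m b)) \<in> ?R" using b im l g Usub by (auto simp: envel_rel_def)
      then have "((g, th ?m b),(l,b)) \<in> ?R" using E by (meson equiv_def symD)
      then show "b \<in> {b. (l, b) \<in> \<Union>((\<lambda>a. ?R `` {(g,a)}) ` U)}" using b by auto
    qed
    moreover have "openin W {b \<in> D (inv ?m). th ?m b \<in> U}"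
      using preimage_open[OF cont[OF m] Dopen[OF inv_closed[OF m]] U] .
    ultimately show "openin W {b. (l, b) \<in> \<Union>((\<lambda>a. ?R `` {(g,a)}) ` U)}" by simp
  qed
  ultimately show ?thesis unfolding enveloping_space_def using quot_open_char[OF E] by blast
qed

lemma (in group) envel_hausdorff:
  assumes A: "alg_pa G W D th" and H: "Hausdorff_space W"
    and Dopen: "\<And>g. g \<in> carrier G \<Longrightarrow> openin W (D g)"
    and Dclosed: "\<And>g. g \<in> carrier G \<Longrightarrow> closedin W (D g)"
    and cont: "\<And>g. g \<in> carrier G \<Longrightarrow> continuous_map (subtopology W (D (inv g))) W (th g)"
  shows "Hausdorff_space (enveloping_space G W D th)"
proof -
  let ?P = "prod_topology (discrete_topology (carrier G)) W"
  let ?R = "envel_rel G W D th"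
  let ?Q = "enveloping_space G W D th"
  have TP: "topspace ?P = carrier G \<times> topspace W" by simp
  have E: "equiv (topspace ?P) ?R" using equiv_envel[OF A] TP by simp
  have TQ: "topspace ?Q = topspace ?P // ?R" unfolding enveloping_space_def using quot_topspace[OF E] .
  show ?thesis unfolding Hausdorff_space_def
  proof (intro allI impI, elim conjE)
    fix p q assume p: "p \<in> topspace ?Q" and q: "q \<in> topspace ?Q" and pq: "p \<noteq> q"
    obtain g x where gx: "g \<in> carrier G" "x \<in> topspace W" "p = ?R``{(g,x)}"
      using p TQ TP by (auto elim!: quotientE)
    obtain h y where hy: "h \<in> carrier G" "y \<in> topspace W" "q = ?R``{(h,y)}"
      using q TQ TP by (auto elim!: quotientE)
    have nr: "((g,x),(h,y)) \<notin> ?R"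
    proof
      assume "((g,x),(h,y)) \<in> ?R"
      then have "p = q" using equiv_class_eq[OF E] gx(3) hy(3) by simp
      then show False using pq by simp
    qed
    let ?k = "inv h \<otimes> g"
    have k: "?k \<in> carrier G" using gx hy by simp
    have ik: "inv ?k = inv g \<otimes> h" using gx hy by (simp add: inv_mult_group)
    have Dsub: "D (inv g \<otimes> h) \<subseteq> topspace W" using Dopen[of "inv g \<otimes> h"] gx hy openin_subset by auto
    obtain U V where UV: "openin W U" "openin W V" "x \<in> U" "y \<in> V"
      and sep: "\<And>a b. a \<in> U \<Longrightarrow> b \<in> V \<Longrightarrow> ((g,a),(h,b)) \<notin> ?R"
    proof (cases "x \<in> D (inv g \<otimes> h)")
      case False
      show ?thesis
      proof (rule that[of "topspace W - D (inv g \<otimes> h)" "topspace W"])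
        show "openin W (topspace W - D (inv g \<otimes> h))"
          using Dclosed[of "inv g \<otimes> h"] gx hy by (simp add: closedin_def)
      next
        fix a b assume "a \<in> topspace W - D (inv g \<otimes> h)"
        then show "((g,a),(h,b)) \<notin> ?R" by (simp add: envel_rel_def)
      qed (use False gx hy in auto)
    next
      case True
      let ?y' = "th ?k x"
      have "th ?k ` topspace (subtopology W (D (inv ?k))) \<subseteq> topspace W"
        by (rule continuous_map_image_subset_topspace[OF cont[OF k]])
      then have "?y' \<in> topspace W" using True ik gx(2) by auto
      moreover have "?y' \<noteq> y" using nr True gx hy by (auto simp: envel_rel_def)
      ultimately have "\<exists>U1 V1. openin W U1 \<and> openin W V1 \<and> ?y' \<in> U1 \<and> y \<in> V1 \<and> disjnt U1 V1"
        using H hy(2) unfolding Hausdorff_space_def by blast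
      then obtain U1 V1 where U1: "openin W U1" "openin W V1" "?y' \<in> U1" "y \<in> V1" "disjnt U1 V1"
        by blast
      show ?thesis
      proof (rule that[of "{a \<in> D (inv ?k). th ?k a \<in> U1}" V1])
        show "openin W {a \<in> D (inv ?k). th ?k a \<in> U1}"
          using preimage_open[OF cont[OF k] Dopen[OF inv_closed[OF k]] U1(1)] .
      next
        fix a b assume a: "a \<in> {a \<in> D (inv ?k). th ?k a \<in> U1}" and b: "b \<in> V1"
        show "((g,a),(h,b)) \<notin> ?R"
        proof
          assume "((g,a),(h,b)) \<in> ?R"
          then have "th ?k a = b" by (simp add: envel_rel_def)
          then show False using a b U1(5) by (auto simp: disjnt_def)
        qed
      qed (use U1 True ik in auto)
    qed
    let ?U = "(\<lambda>a. ?R `` {(g,a)}) ` U" and ?V = "(\<lambda>b. ?R `` {(h,b)}) ` V"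
    have "openin ?Q ?U" by (rule sat_open[OF A Dopen cont gx(1) UV(1)])
    moreover have "openin ?Q ?V" by (rule sat_open[OF A Dopen cont hy(1) UV(2)])
    moreover have "p \<in> ?U" "q \<in> ?V" using gx hy UV by auto
    moreover have "disjnt ?U ?V"
    proof -
      have "False" if "a \<in> U" "b \<in> V" "?R `` {(g,a)} = ?R `` {(h,b)}" for a b
      proof -
        have "a \<in> topspace W" "b \<in> topspace W" using that UV openin_subset by auto
        then have "((g,a),(h,b)) \<in> ?R" using that(3) gx hy E by (simp add: eq_equiv_class_iff)
        then show False using sep that by blast
      qed
      then show ?thesis by (auto simp: disjnt_def)
    qed
    ultimately show "\<exists>U V. openin ?Q U \<and> openin ?Q V \<and> p \<in> U \<and> q \<in> V \<and> disjnt U V" by blast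
  qed
qed



lemma (in group) envel_closed:
  assumes A: "alg_pa G Z Dz thz"
    and HQ: "Hausdorff_space (enveloping_space G Z Dz thz)"
    and CY: "compact_space Y"
    and c: "continuous_map Y Z c"
    and k: "k \<in> carrier G"
    and S: "S \<subseteq> topspace Y"
    and h1: "\<And>x y. x \<in> topspace Y \<Longrightarrow> x \<notin> S \<Longrightarrow> y \<in> topspace Y \<Longrightarrow>
               ((\<one>, c x), (inv k, c y)) \<notin> envel_rel G Z Dz thz"
    and h2: "\<And>a. a \<in> S \<Longrightarrow> f a \<in> topspace Y \<and> ((\<one>, c a), (inv k, c (f a))) \<in> envel_rel G Z Dz thz"
  shows "closedin Y S"
proof -
  let ?P = "prod_topology (discrete_topology (carrier G)) Z"
  let ?R = "envel_rel G Z Dz thz"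
  let ?Q = "enveloping_space G Z Dz thz"
  have TP: "topspace ?P = carrier G \<times> topspace Z" by simp
  have E: "equiv (topspace ?P) ?R" using equiv_envel[OF A] TP by simp
  have TQ: "topspace ?Q = topspace ?P // ?R" unfolding enveloping_space_def using quot_topspace[OF E] .
  have QO: "openin ?Q V \<longleftrightarrow> V \<subseteq> topspace ?P // ?R \<and> openin ?P (\<Union>V)" for V
    unfolding enveloping_space_def using quot_open_char[OF E] .
  have cY: "c a \<in> topspace Z" if "a \<in> topspace Y" for a
    using continuous_map_image_subset_topspace[OF c] that by blast
  have ik: "inv k \<in> carrier G" using k by simp
  have cont1: "continuous_map Y ?P (\<lambda>a. (l, c a))" if "l \<in> carrier G" for l
    by (intro continuous_map_pairedI c) (simp add: that)
  have "openin Y (topspace Y - S)"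
  proof (subst openin_subopen, intro ballI)
    fix x assume x: "x \<in> topspace Y - S"
    have ex: "\<forall>y\<in>topspace Y. \<exists>PQ. openin ?Q (fst PQ) \<and> openin ?Q (snd PQ) \<and> ?R``{(\<one>, c x)} \<in> fst PQ \<and>
               ?R``{(inv k, c y)} \<in> snd PQ \<and> disjnt (fst PQ) (snd PQ)"
    proof
      fix y assume y: "y \<in> topspace Y"
      have p: "?R``{(\<one>, c x)} \<in> topspace ?Q" using TQ x cY by (auto intro!: quotientI)
      have q: "?R``{(inv k, c y)} \<in> topspace ?Q" using TQ y cY ik by (auto intro!: quotientI)
      have "?R``{(\<one>, c x)} \<noteq> ?R``{(inv k, c y)}"
      proof
        assume "?R``{(\<one>, c x)} = ?R``{(inv k, c y)}"
        then have "((\<one>, c x), (inv k, c y)) \<in> ?R"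
          using eq_equiv_class_iff[OF E] x y cY ik by simp
        then show False using h1 x y by blast
      qed
      then have "\<exists>U V. openin ?Q U \<and> openin ?Q V \<and> ?R``{(\<one>, c x)} \<in> U \<and> ?R``{(inv k, c y)} \<in> V \<and> disjnt U V"
        using HQ p q unfolding Hausdorff_space_def by blast
      then obtain U V where "openin ?Q U \<and> openin ?Q V \<and> ?R``{(\<one>, c x)} \<in> U \<and> ?R``{(inv k, c y)} \<in> V \<and> disjnt U V"
        by blast
      then show "\<exists>PQ. openin ?Q (fst PQ) \<and> openin ?Q (snd PQ) \<and> ?R``{(\<one>, c x)} \<in> fst PQ \<and>
               ?R``{(inv k, c y)} \<in> snd PQ \<and> disjnt (fst PQ) (snd PQ)"
        by (intro exI[of _ "(U,V)"]) simp
    qed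
    obtain PQ where PQ: "\<forall>y\<in>topspace Y. openin ?Q (fst (PQ y)) \<and> openin ?Q (snd (PQ y)) \<and>
        ?R``{(\<one>, c x)} \<in> fst (PQ y) \<and> ?R``{(inv k, c y)} \<in> snd (PQ y) \<and> disjnt (fst (PQ y)) (snd (PQ y))"
      using bchoice[OF ex] by blast
    define Af where "Af y = {a \<in> topspace Y. (\<one>, c a) \<in> \<Union>(fst (PQ y))}" for y
    define Bf where "Bf y = {b \<in> topspace Y. (inv k, c b) \<in> \<Union>(snd (PQ y))}" for y
    have Aopen: "openin Y (Af y)" if "y \<in> topspace Y" for y
    proof -
      have "openin ?P (\<Union>(fst (PQ y)))" using PQ that QO by blast
      then show ?thesis unfolding Af_def by (rule openin_continuous_map_preimage[OF cont1[OF one_closed]])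
    qed
    have Bopen: "openin Y (Bf y)" if "y \<in> topspace Y" for y
    proof -
      have "openin ?P (\<Union>(snd (PQ y)))" using PQ that QO by blast
      then show ?thesis unfolding Bf_def by (rule openin_continuous_map_preimage[OF cont1[OF ik]])
    qed
    have yB: "y \<in> Bf y" if "y \<in> topspace Y" for y
    proof -
      have "snd (PQ y) \<subseteq> topspace ?P // ?R" using PQ that QO by blast
      then show ?thesis unfolding Bf_def using PQ that quot_class_in[OF E] that cY ik by auto
    qed
    have xA: "x \<in> Af y" if "y \<in> topspace Y" for y
    proof -
      have "fst (PQ y) \<subseteq> topspace ?P // ?R" using PQ that QO by blast
      then show ?thesis unfolding Af_def using PQ that quot_class_in[OF E] x cY by auto
    qed
    have "topspace Y \<subseteq> \<Union>(Bf ` topspace Y)" using yB by auto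
    moreover have "compactin Y (topspace Y)" using CY by (simp add: compact_space_def)
    ultimately obtain F where F: "finite F" "F \<subseteq> Bf ` topspace Y" "topspace Y \<subseteq> \<Union>F"
      using compactinD[of Y "topspace Y" "Bf ` topspace Y"] Bopen by blast
    obtain F' where F': "F' \<subseteq> topspace Y" "finite F'" "F = Bf ` F'"
      using finite_subset_image[OF F(1,2)] by blast
    define T where "T = (\<Inter>y \<in> F'. Af y) \<inter> topspace Y"
    have "openin Y T" unfolding T_def
      using F' Aopen by (intro openin_INT) auto
    moreover have "x \<in> T" unfolding T_def using xA F' x by auto
    moreover have "T \<subseteq> topspace Y - S"
    proof
      fix a assume a: "a \<in> T"
      show "a \<in> topspace Y - S"
      proof (rule ccontr)
        assume "a \<notin> topspace Y - S"
        then have aS: "a \<in> S" using a T_def by auto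
        have fa: "f a \<in> topspace Y" and rel: "((\<one>, c a), (inv k, c (f a))) \<in> ?R" using h2[OF aS] by auto
        then obtain y where y: "y \<in> F'" "f a \<in> Bf y" using F F' by auto
        have yY: "y \<in> topspace Y" using y F' by auto
        have s1: "snd (PQ y) \<subseteq> topspace ?P // ?R" "fst (PQ y) \<subseteq> topspace ?P // ?R"
          using PQ yY QO by blast+
        have "?R``{(inv k, c (f a))} \<in> snd (PQ y)"
          using y(2) quot_class_in[OF E s1(1)] cY fa ik unfolding Bf_def by auto
        moreover have "a \<in> Af y" using a y(1) T_def by auto
        then have "?R``{(\<one>, c a)} \<in> fst (PQ y)"
          using quot_class_in[OF E s1(2)] cY unfolding Af_def by auto
        moreover have "?R``{(\<one>, c a)} = ?R``{(inv k, c (f a))}"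
          using equiv_class_eq[OF E rel] .
        ultimately show False using PQ yY by (auto simp: disjnt_def)
      qed
    qed
    ultimately show "\<exists>T. openin Y T \<and> x \<in> T \<and> T \<subseteq> topspace Y - S" by blast
  qed
  then show ?thesis using S by (simp add: closedin_def)
qed



lemma (in group) tpa_alg:
  assumes T: "top_partial_action G Y D th"
  shows "alg_pa G Y D th"
proof -
  note T' = T[unfolded top_partial_action_def]
  have map: "th g x \<in> D g" if g: "g \<in> carrier G" and x: "x \<in> D (inv g)" for g x
  proof -
    have hm: "homeomorphic_map (subtopology Y (D (inv g))) (subtopology Y (D g)) (th g)"
      using T' g by blast
    have "x \<in> topspace Y" using T' g x openin_subset by (metis inv_closed subsetD)
    then have "x \<in> topspace (subtopology Y (D (inv g)))" using x by simp
    then have "th g x \<in> topspace (subtopology Y (D g))"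
      using homeomorphic_imp_surjective_map[OF hm] by blast
    then show ?thesis by simp
  qed
  show ?thesis unfolding alg_pa_def
    using T' map openin_subset by blast
qed

lemma (in group) tpa_cont:
  assumes T: "top_partial_action G Y D th" and g: "g \<in> carrier G"
  shows "continuous_map (subtopology Y (D (inv g))) Y (th g)"
proof -
  have hm: "homeomorphic_map (subtopology Y (D (inv g))) (subtopology Y (D g)) (th g)"
    using T g unfolding top_partial_action_def by blast
  then have "continuous_map (subtopology Y (D (inv g))) (subtopology Y (D g)) (th g)"
    by (rule homeomorphic_imp_continuous_map)
  then show ?thesis using continuous_map_in_subtopology by blast
qed

lemma co_topspace: "topspace (compact_open X Y) = cmaps X Y"
proof -
  have "cmaps X Y \<in> {{f \<in> cmaps X Y. f ` K \<subseteq> U} | K U. compactin X K \<and> openin Y U}"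
    by (rule CollectI, rule exI[of _ "{}"], rule exI[of _ "topspace Y"]) auto
  then show ?thesis unfolding compact_open_def topology_generated_by_topspace by blast
qed

lemma co_basic:
  assumes "compactin X K" "openin Y U"
  shows "openin (compact_open X Y) {f \<in> cmaps X Y. f ` K \<subseteq> U}"
  unfolding compact_open_def by (rule topology_generated_by_Basis) (use assms in blast)

lemma cmaps_ext:
  assumes "f \<in> cmaps X Y" "x \<notin> topspace X"
  shows "f x = undefined"
  using assms by (auto simp: cmaps_def PiE_def extensional_def)

lemma cmaps_img: "f \<in> cmaps X Y \<Longrightarrow> x \<in> topspace X \<Longrightarrow> f x \<in> topspace Y"
  by (auto simp: cmaps_def)



lemma (in group) tpa_map:
  assumes T: "top_partial_action G Y D th" and g: "g \<in> carrier G" and x: "x \<in> D (inv g)"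
  shows "th g x \<in> D g"
proof -
  note T' = T[unfolded top_partial_action_def]
  have hm: "homeomorphic_map (subtopology Y (D (inv g))) (subtopology Y (D g)) (th g)"
    using T' g by blast
  have "x \<in> topspace Y" using T' g x openin_subset by (metis inv_closed subsetD)
  then have "x \<in> topspace (subtopology Y (D (inv g)))" using x by simp
  then have "th g x \<in> topspace (subtopology Y (D g))"
    using homeomorphic_imp_surjective_map[OF hm] by blast
  then show ?thesis by simp
qed

lemma (in group) hat_alg:
  assumes T: "top_partial_action G Y D th"
  shows "alg_pa G (compact_open X Y) (hat_dom X Y D) (hat_act X th)"
proof -
  have A: "alg_pa G Y D th" by (rule tpa_alg[OF T])
  note A' = A[unfolded alg_pa_def]
  note A1 = A'[THEN conjunct1] and A2 = A'[THEN conjunct2, THEN conjunct1]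
   and A3 = A'[THEN conjunct2, THEN conjunct2, THEN conjunct1]
   and A4 = A'[THEN conjunct2, THEN conjunct2, THEN conjunct2, THEN conjunct1]
   and A5 = A'[THEN conjunct2, THEN conjunct2, THEN conjunct2, THEN conjunct2, THEN conjunct1]
   and A6 = A'[THEN conjunct2, THEN conjunct2, THEN conjunct2, THEN conjunct2, THEN conjunct2]
  have Dsub: "D g \<subseteq> topspace Y" if "g \<in> carrier G" for g using A1 that by blast
  have map: "th g y \<in> D g" if "g \<in> carrier G" "y \<in> D (inv g)" for g y
    by (rule tpa_map[OF T that])
  have eqI: "F = f" if "f \<in> cmaps X Y" "\<And>x. x \<in> topspace X \<Longrightarrow> F x = f x"
    "\<And>x. x \<notin> topspace X \<Longrightarrow> F x = undefined" for F f
  proof (rule ext)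
    fix x show "F x = f x"
    proof (cases "x \<in> topspace X")
      case True then show ?thesis using that(2) by simp
    next
      case False then show ?thesis using that(3) cmaps_ext[OF that(1) False] by simp
    qed
  qed
  have s1: "\<forall>g\<in>carrier G. hat_dom X Y D g \<subseteq> topspace (compact_open X Y)"
    by (auto simp: hat_dom_def co_topspace)
  have s2: "hat_dom X Y D \<one> = topspace (compact_open X Y)"
  proof -
    have "D \<one> = topspace Y" by (rule A2)
    then show ?thesis by (auto simp: hat_dom_def co_topspace cmaps_img)
  qed
  have s3: "\<forall>f\<in>topspace (compact_open X Y). hat_act X th \<one> f = f"
  proof
    fix f assume "f \<in> topspace (compact_open X Y)"
    then have f: "f \<in> cmaps X Y" by (simp add: co_topspace)
    show "hat_act X th \<one> f = f"
      by (rule eqI[OF f]) (use A3 f cmaps_img[OF f] in \<open>auto simp: hat_act_def\<close>)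
  qed
  have s4: "\<forall>g\<in>carrier G. \<forall>f\<in>hat_dom X Y D (inv g). hat_act X th g f \<in> topspace (compact_open X Y)
      \<longrightarrow> hat_act X th g f \<in> hat_dom X Y D g"
    using map by (auto simp: hat_dom_def co_topspace hat_act_def)
  have s5: "\<forall>g\<in>carrier G. \<forall>f\<in>hat_dom X Y D (inv g). hat_act X th (inv g) (hat_act X th g f) = f"
  proof (intro ballI)
    fix g f assume g: "g \<in> carrier G" and f: "f \<in> hat_dom X Y D (inv g)"
    then have fc: "f \<in> cmaps X Y" by (simp add: hat_dom_def)
    show "hat_act X th (inv g) (hat_act X th g f) = f"
    proof (rule eqI[OF fc])
      fix x assume x: "x \<in> topspace X"
      then have "f x \<in> D (inv g)" using f by (auto simp: hat_dom_def)
      then show "hat_act X th (inv g) (hat_act X th g f) x = f x"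
        using A5 g x by (simp add: hat_act_def)
    qed (simp add: hat_act_def)
  qed
  have s6: "\<forall>g\<in>carrier G. \<forall>h\<in>carrier G. \<forall>f\<in>hat_dom X Y D (inv h).
        hat_act X th h f \<in> hat_dom X Y D (inv g) \<longrightarrow>
          f \<in> hat_dom X Y D (inv (g \<otimes> h)) \<and> hat_act X th (g \<otimes> h) f = hat_act X th g (hat_act X th h f)"
  proof (intro ballI impI)
    fix g h f assume g: "g \<in> carrier G" and h: "h \<in> carrier G" and f: "f \<in> hat_dom X Y D (inv h)"
      and hf: "hat_act X th h f \<in> hat_dom X Y D (inv g)"
    have fc: "f \<in> cmaps X Y" using f by (simp add: hat_dom_def)
    have pt: "f x \<in> D (inv (g \<otimes> h)) \<and> th (g \<otimes> h) (f x) = th g (th h (f x))" if x: "x \<in> topspace X" for x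
    proof -
      have "f x \<in> D (inv h)" using f x by (auto simp: hat_dom_def)
      moreover have "th h (f x) \<in> D (inv g)" using hf x by (auto simp: hat_dom_def hat_act_def)
      ultimately show ?thesis using A6 g h by blast
    qed
    have "f \<in> hat_dom X Y D (inv (g \<otimes> h))" using fc pt by (auto simp: hat_dom_def)
    moreover have "hat_act X th (g \<otimes> h) f = hat_act X th g (hat_act X th h f)"
      using pt by (auto simp: hat_act_def)
    ultimately show "f \<in> hat_dom X Y D (inv (g \<otimes> h)) \<and> hat_act X th (g \<otimes> h) f = hat_act X th g (hat_act X th h f)"
      by blast
  qed
  show ?thesis unfolding alg_pa_def by (intro conjI s1 s2 s3 s4 s5 s6)
qed


lemma co_hausdorff:
  assumes H: "Hausdorff_space Y"
  shows "Hausdorff_space (compact_open X Y)"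
  unfolding Hausdorff_space_def co_topspace
proof (intro allI impI, elim conjE)
  fix f g assume f: "f \<in> cmaps X Y" and g: "g \<in> cmaps X Y" and fg: "f \<noteq> g"
  obtain x where x: "f x \<noteq> g x" using fg by auto
  have xX: "x \<in> topspace X"
  proof (rule ccontr)
    assume "x \<notin> topspace X"
    then show False using x cmaps_ext[OF f] cmaps_ext[OF g] by simp
  qed
  have "f x \<in> topspace Y" "g x \<in> topspace Y" using cmaps_img[OF f xX] cmaps_img[OF g xX] by auto
  then have "\<exists>U V. openin Y U \<and> openin Y V \<and> f x \<in> U \<and> g x \<in> V \<and> disjnt U V"
    using H x unfolding Hausdorff_space_def by blast
  then obtain U V where UV: "openin Y U" "openin Y V" "f x \<in> U" "g x \<in> V" "disjnt U V" by blast
  have K: "compactin X {x}" using xX by simp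
  show "\<exists>U V. openin (compact_open X Y) U \<and> openin (compact_open X Y) V \<and> f \<in> U \<and> g \<in> V \<and> disjnt U V"
  proof (intro exI conjI)
    show "openin (compact_open X Y) {h \<in> cmaps X Y. h ` {x} \<subseteq> U}" by (rule co_basic[OF K UV(1)])
    show "openin (compact_open X Y) {h \<in> cmaps X Y. h ` {x} \<subseteq> V}" by (rule co_basic[OF K UV(2)])
    show "f \<in> {h \<in> cmaps X Y. h ` {x} \<subseteq> U}" using f UV by simp
    show "g \<in> {h \<in> cmaps X Y. h ` {x} \<subseteq> V}" using g UV by simp
    show "disjnt {h \<in> cmaps X Y. h ` {x} \<subseteq> U} {h \<in> cmaps X Y. h ` {x} \<subseteq> V}"
      using UV(5) by (auto simp: disjnt_def)
  qed
qed

lemma hat_dom_open: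
  assumes "compact_space X" "openin Y (D g)"
  shows "openin (compact_open X Y) (hat_dom X Y D g)"
  unfolding hat_dom_def using co_basic[of X "topspace X" Y "D g"] assms
  by (simp add: compact_space_def)

lemma hat_dom_closed:
  assumes "closedin Y (D g)"
  shows "closedin (compact_open X Y) (hat_dom X Y D g)"
proof -
  have "cmaps X Y - hat_dom X Y D g = (\<Union>x\<in>topspace X. {f \<in> cmaps X Y. f ` {x} \<subseteq> topspace Y - D g})"
    by (auto simp: hat_dom_def cmaps_img)
  moreover have "openin (compact_open X Y) (\<Union>x\<in>topspace X. {f \<in> cmaps X Y. f ` {x} \<subseteq> topspace Y - D g})"
  proof -
    have "openin (compact_open X Y) {f \<in> cmaps X Y. f ` {x} \<subseteq> topspace Y - D g}" if "x \<in> topspace X" for x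
      by (rule co_basic) (use that assms in \<open>auto simp: closedin_def\<close>)
    then show ?thesis by (intro openin_Union) blast
  qed
  ultimately show ?thesis unfolding closedin_def co_topspace by (auto simp: hat_dom_def)
qed


definition cst :: "'a topology \<Rightarrow> 'b \<Rightarrow> 'a \<Rightarrow> 'b" where
  "cst X y = (\<lambda>x\<in>topspace X. y)"
lemma cst_cmaps: "y \<in> topspace Y \<Longrightarrow> cst X y \<in> cmaps X Y"
proof -
  assume y: "y \<in> topspace Y"
  have "continuous_map X Y (\<lambda>x. y)" using y by simp
  then have "continuous_map X Y (cst X y)" by (rule continuous_map_eq) (simp add: cst_def)
  then show ?thesis using y by (auto simp: cmaps_def cst_def)
qed

lemma cst_img: "K \<subseteq> topspace X \<Longrightarrow> K \<noteq> {} \<Longrightarrow> cst X y ` K = {y}"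
  unfolding cst_def by auto

lemma cst_cont:
  assumes "topspace X \<noteq> {}"
  shows "continuous_map Y (compact_open X Y) (cst X)"
  unfolding compact_open_def
proof (rule continuous_on_generated_topo)
  fix U assume "U \<in> {{f \<in> cmaps X Y. f ` K \<subseteq> V} | K V. compactin X K \<and> openin Y V}"
  then obtain K V where U: "U = {f \<in> cmaps X Y. f ` K \<subseteq> V}" "compactin X K" "openin Y V" by blast
  have KX: "K \<subseteq> topspace X" using U(2) compactin_subset_topspace by blast
  have mem: "y \<in> cst X -` U \<inter> topspace Y \<longleftrightarrow> y \<in> topspace Y \<and> cst X y ` K \<subseteq> V" for y
    using cst_cmaps[of y Y X] unfolding U(1) vimage_def by auto
  show "openin Y (cst X -` U \<inter> topspace Y)"
  proof (cases "K = {}")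
    case True
    then have "cst X -` U \<inter> topspace Y = topspace Y" using mem by auto
    then show ?thesis by simp
  next
    case False
    have "cst X -` U \<inter> topspace Y = V"
    proof (intro subset_antisym subsetI)
      fix y assume "y \<in> cst X -` U \<inter> topspace Y"
      then show "y \<in> V" using mem[of y] cst_img[OF KX False, of y] by auto
    next
      fix y assume "y \<in> V"
      then show "y \<in> cst X -` U \<inter> topspace Y"
        using mem[of y] cst_img[OF KX False, of y] openin_subset[OF U(3)] by auto
    qed
    then show ?thesis using U(3) by simp
  qed
next
  have c1: "cmaps X Y \<in> {{f \<in> cmaps X Y. f ` K \<subseteq> V} | K V. compactin X K \<and> openin Y V}"
    by (rule CollectI, rule exI[of _ "{}"], rule exI[of _ "topspace Y"]) auto
  have c2: "cst X ` topspace Y \<subseteq> cmaps X Y" using cst_cmaps[of _ Y X] by blast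
  show "cst X ` topspace Y \<subseteq> \<Union>{{f \<in> cmaps X Y. f ` K \<subseteq> V} | K V. compactin X K \<and> openin Y V}"
    using c2 Union_upper[OF c1] by (rule subset_trans)
qed



lemma co_cont_into:
  assumes op: "\<And>K V. compactin X K \<Longrightarrow> openin Y V \<Longrightarrow> openin Z {z \<in> topspace Z. F z \<in> cmaps X Y \<and> F z ` K \<subseteq> V}"
    and im: "F ` topspace Z \<subseteq> cmaps X Y"
  shows "continuous_map Z (compact_open X Y) F"
  unfolding compact_open_def
proof (rule continuous_on_generated_topo)
  fix U assume "U \<in> {{f \<in> cmaps X Y. f ` K \<subseteq> V} | K V. compactin X K \<and> openin Y V}"
  then obtain K V where U: "U = {f \<in> cmaps X Y. f ` K \<subseteq> V}" "compactin X K" "openin Y V" by blast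
  have "F -` U \<inter> topspace Z = {z \<in> topspace Z. F z \<in> cmaps X Y \<and> F z ` K \<subseteq> V}"
    unfolding U(1) by auto
  then show "openin Z (F -` U \<inter> topspace Z)" using op[OF U(2,3)] by simp
next
  have c1: "cmaps X Y \<in> {{f \<in> cmaps X Y. f ` K \<subseteq> V} | K V. compactin X K \<and> openin Y V}"
    by (rule CollectI, rule exI[of _ "{}"], rule exI[of _ "topspace Y"]) auto
  show "F ` topspace Z \<subseteq> \<Union>{{f \<in> cmaps X Y. f ` K \<subseteq> V} | K V. compactin X K \<and> openin Y V}"
    using im Union_upper[OF c1] by (rule subset_trans)
qed

lemma (in group) hat_act_cmaps:
  assumes T: "top_partial_action G Y D th" and g: "g \<in> carrier G"
    and f: "f \<in> hat_dom X Y D (inv g)"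
  shows "hat_act X th g f \<in> cmaps X Y"
proof -
  have fc: "f \<in> cmaps X Y" and fi: "f ` topspace X \<subseteq> D (inv g)" using f by (auto simp: hat_dom_def)
  have "continuous_map X Y f" using fc by (simp add: cmaps_def)
  then have "continuous_map X (subtopology Y (D (inv g))) f"
    using fi by (simp add: continuous_map_in_subtopology image_subset_iff_funcset)
  then have "continuous_map X Y (th g \<circ> f)"
    by (rule continuous_map_compose[OF _ tpa_cont[OF T g]])
  then have c: "continuous_map X Y (hat_act X th g f)"
    by (rule continuous_map_eq) (simp add: hat_act_def)
  have "th g (f x) \<in> topspace Y" if "x \<in> topspace X" for x
  proof -
    have "th g (f x) \<in> D g" using tpa_map[OF T g] fi that by blast
    moreover have "D g \<subseteq> topspace Y" using T g openin_subset unfolding top_partial_action_def by blast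
    ultimately show ?thesis by blast
  qed
  then have "hat_act X th g f \<in> topspace X \<rightarrow>\<^sub>E topspace Y" by (simp add: hat_act_def)
  then show ?thesis using c by (simp add: cmaps_def)
qed

lemma (in group) hat_cont:
  assumes T: "top_partial_action G Y D th" and g: "g \<in> carrier G"
  shows "continuous_map (subtopology (compact_open X Y) (hat_dom X Y D (inv g))) (compact_open X Y) (hat_act X th g)"
proof (rule co_cont_into)
  let ?Hd = "hat_dom X Y D (inv g)"
  have tZ: "topspace (subtopology (compact_open X Y) ?Hd) = ?Hd"
    by (auto simp: co_topspace hat_dom_def)
  show "hat_act X th g ` topspace (subtopology (compact_open X Y) ?Hd) \<subseteq> cmaps X Y"
    using hat_act_cmaps[OF T g] tZ by auto
  fix K V assume K: "compactin X K" and V: "openin Y V"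
  have KX: "K \<subseteq> topspace X" using K compactin_subset_topspace by blast
  let ?V' = "{y \<in> D (inv g). th g y \<in> V}"
  have V': "openin Y ?V'"
    using preimage_open[OF tpa_cont[OF T g]] T g V unfolding top_partial_action_def by blast
  have "{z \<in> topspace (subtopology (compact_open X Y) ?Hd). hat_act X th g z \<in> cmaps X Y \<and> hat_act X th g z ` K \<subseteq> V}
        = ?Hd \<inter> {f \<in> cmaps X Y. f ` K \<subseteq> ?V'}"
  proof (intro subset_antisym subsetI)
    fix f assume "f \<in> {z \<in> topspace (subtopology (compact_open X Y) ?Hd). hat_act X th g z \<in> cmaps X Y \<and> hat_act X th g z ` K \<subseteq> V}"
    then have f: "f \<in> ?Hd" "hat_act X th g f ` K \<subseteq> V" using tZ by auto
    then show "f \<in> ?Hd \<inter> {f \<in> cmaps X Y. f ` K \<subseteq> ?V'}"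
      using KX by (auto simp: hat_dom_def hat_act_def)
  next
    fix f assume f: "f \<in> ?Hd \<inter> {f \<in> cmaps X Y. f ` K \<subseteq> ?V'}"
    then have "hat_act X th g f ` K \<subseteq> V" using KX by (auto simp: hat_act_def)
    then show "f \<in> {z \<in> topspace (subtopology (compact_open X Y) ?Hd). hat_act X th g z \<in> cmaps X Y \<and> hat_act X th g z ` K \<subseteq> V}"
      using f tZ hat_act_cmaps[OF T g] by auto
  qed
  moreover have "openin (subtopology (compact_open X Y) ?Hd) (?Hd \<inter> {f \<in> cmaps X Y. f ` K \<subseteq> ?V'})"
    by (rule openin_subtopology_Int2[OF co_basic[OF K V']])
  ultimately show "openin (subtopology (compact_open X Y) ?Hd)
     {z \<in> topspace (subtopology (compact_open X Y) ?Hd). hat_act X th g z \<in> cmaps X Y \<and> hat_act X th g z ` K \<subseteq> V}"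
    by simp
qed



theorem corollary3p6:
  fixes G :: "('g, 'm) monoid_scheme"
    and Y :: "'b topology" and D :: "'g \<Rightarrow> 'b set" and th :: "'g \<Rightarrow> 'b \<Rightarrow> 'b"
    and X :: "'a topology"
  assumes "group G" and "countable (carrier G)"
    and "top_partial_action G Y D th"
    and "compact_space Y" and "Hausdorff_space Y"
    and "compact_space X" and "Hausdorff_space X" and "topspace X \<noteq> {}"
  shows "((\<forall>g\<in>carrier G. closedin Y (D g) \<and> openin Y (D g))
            \<longleftrightarrow> Hausdorff_space (enveloping_space G Y D th))
       \<and> (Hausdorff_space (enveloping_space G Y D th)
            \<longleftrightarrow> Hausdorff_space (enveloping_space G (compact_open X Y)
                                   (hat_dom X Y D) (hat_act X th)))"
proof -
  interpret group G by (rule assms(1))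
  note T = assms(3)
  have Dopen: "\<And>g. g \<in> carrier G \<Longrightarrow> openin Y (D g)" using T unfolding top_partial_action_def by blast
  have AY: "alg_pa G Y D th" by (rule tpa_alg[OF T])
  have AC: "alg_pa G (compact_open X Y) (hat_dom X Y D) (hat_act X th)" by (rule hat_alg[OF T])
  have contY: "\<And>g. g \<in> carrier G \<Longrightarrow> continuous_map (subtopology Y (D (inv\<^bsub>G\<^esub> g))) Y (th g)"
    by (rule tpa_cont[OF T])
  have contC: "\<And>g. g \<in> carrier G \<Longrightarrow> continuous_map (subtopology (compact_open X Y) (hat_dom X Y D (inv\<^bsub>G\<^esub> g))) (compact_open X Y) (hat_act X th g)"
    by (rule hat_cont[OF T])
  let ?I = "\<forall>g\<in>carrier G. closedin Y (D g) \<and> openin Y (D g)"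
  have I2: "Hausdorff_space (enveloping_space G Y D th)" if I: ?I
    by (rule envel_hausdorff[OF AY assms(5) Dopen _ contY]) (use I in auto)
  have I3: "Hausdorff_space (enveloping_space G (compact_open X Y) (hat_dom X Y D) (hat_act X th))" if I: ?I
  proof (rule envel_hausdorff[OF AC co_hausdorff[OF assms(5)] _ _ contC])
    fix g assume "g \<in> carrier G"
    then show "openin (compact_open X Y) (hat_dom X Y D g)" by (intro hat_dom_open[OF assms(6)] Dopen)
  next
    fix g assume "g \<in> carrier G"
    then show "closedin (compact_open X Y) (hat_dom X Y D g)" using I by (intro hat_dom_closed) auto
  qed
  have fin: ?I if cl: "\<And>k. k \<in> carrier G \<Longrightarrow> closedin Y (D (inv\<^bsub>G\<^esub> k))"
  proof
    fix g assume g: "g \<in> carrier G"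
    have "closedin Y (D (inv\<^bsub>G\<^esub> (inv\<^bsub>G\<^esub> g)))" using cl[of "inv\<^bsub>G\<^esub> g"] g by simp
    then show "closedin Y (D g) \<and> openin Y (D g)" using g Dopen by simp
  qed
  have Dsub: "D (inv\<^bsub>G\<^esub> k) \<subseteq> topspace Y" if "k \<in> carrier G" for k
    using Dopen[of "inv\<^bsub>G\<^esub> k"] that openin_subset by auto
  have mapY: "th k a \<in> topspace Y" if "k \<in> carrier G" "a \<in> D (inv\<^bsub>G\<^esub> k)" for k a
    using tpa_map[OF T that] Dsub[of "inv\<^bsub>G\<^esub> k"] Dopen[of k] openin_subset that by auto
  have 2: ?I if H: "Hausdorff_space (enveloping_space G Y D th)"
  proof (rule fin)
    fix k assume k: "k \<in> carrier G"
    show "closedin Y (D (inv\<^bsub>G\<^esub> k))"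
    proof (rule envel_closed[OF AY H assms(4) continuous_map_id k Dsub[OF k], of "th k"])
      fix x y assume "x \<in> topspace Y" "x \<notin> D (inv\<^bsub>G\<^esub> k)" "y \<in> topspace Y"
      then show "((\<one>\<^bsub>G\<^esub>, id x), (inv\<^bsub>G\<^esub> k, id y)) \<notin> envel_rel G Y D th" using k by (simp add: envel_rel_def)
    next
      fix a assume a: "a \<in> D (inv\<^bsub>G\<^esub> k)"
      have "a \<in> topspace Y" using a Dsub[OF k] by auto
      then show "th k a \<in> topspace Y \<and> ((\<one>\<^bsub>G\<^esub>, id a), (inv\<^bsub>G\<^esub> k, id (th k a))) \<in> envel_rel G Y D th"
        using k a mapY[OF k a] by (simp add: envel_rel_def)
    qed
  qed
  have 3: ?I if H: "Hausdorff_space (enveloping_space G (compact_open X Y) (hat_dom X Y D) (hat_act X th))"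
  proof (rule fin)
    fix k assume k: "k \<in> carrier G"
    show "closedin Y (D (inv\<^bsub>G\<^esub> k))"
    proof (rule envel_closed[OF AC H assms(4) cst_cont[OF assms(8)] k Dsub[OF k], of "th k"])
      fix x y assume x: "x \<in> topspace Y" "x \<notin> D (inv\<^bsub>G\<^esub> k)" and y: "y \<in> topspace Y"
      obtain z where z: "z \<in> topspace X" using assms(8) by blast
      have "cst X x \<notin> hat_dom X Y D (inv\<^bsub>G\<^esub> k)"
        using x z by (auto simp: hat_dom_def cst_def)
      then show "((\<one>\<^bsub>G\<^esub>, cst X x), (inv\<^bsub>G\<^esub> k, cst X y)) \<notin> envel_rel G (compact_open X Y) (hat_dom X Y D) (hat_act X th)"
        using k by (simp add: envel_rel_def)
    next
      fix a assume a: "a \<in> D (inv\<^bsub>G\<^esub> k)"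
      have aY: "a \<in> topspace Y" using a Dsub[OF k] by auto
      have c1: "cst X a \<in> cmaps X Y" by (rule cst_cmaps[OF aY])
      have c2: "cst X (th k a) \<in> cmaps X Y" by (rule cst_cmaps[OF mapY[OF k a]])
      have c3: "cst X a \<in> hat_dom X Y D (inv\<^bsub>G\<^esub> k)" using c1 a by (auto simp: hat_dom_def cst_def)
      have c4: "hat_act X th k (cst X a) = cst X (th k a)" by (auto simp: hat_act_def cst_def)
      show "th k a \<in> topspace Y \<and> ((\<one>\<^bsub>G\<^esub>, cst X a), (inv\<^bsub>G\<^esub> k, cst X (th k a))) \<in> envel_rel G (compact_open X Y) (hat_dom X Y D) (hat_act X th)"
        using k mapY[OF k a] c1 c2 c3 c4 by (simp add: envel_rel_def co_topspace)
    qed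
  qed
  show ?thesis using I2 I3 2 3 by blast
qed

end
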